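(* Let $H$ be a complex infinite-dimensional separable Hilbert space and let $(f_n)_{n=1}^\infty$ be a Bessel sequence in $H$ with optimal Bessel bound $B$ and analysis operator $U$, such that there is a Bessel sequence with analysis operator $V$ for which $I-V^*U$ is compact. Then $d=\dim\operatorname{Ker}U<\infty$, any finite sequence $(x_n)_{n=1}^k$ with $(x_n)_{n=1}^k\cup(f_n)_{n=1}^\infty$ a frame for $H$ satisfies $k\ge d$, and if $(w_1,\dots,w_d)$ is an orthonormal basis of $\operatorname{Ker}U$ then $(\sqrt B w_n)_{n=1}^d\cup(f_n)_{n=1}^\infty$ is a frame for $H$.
   Context: Bessel sequence, frame, optimal Bessel bound as usual; the analysis operator is $U:H\to\ell^2$, $Ux=(\langle x,f_n\rangle)_n$. The notation $(x_n)_{n=1}^k\cup(f_n)_{n=1}^\infty$ denotes the sequence $x_1,\dots,x_k,f_1,f_2,\dots$. *)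

theory Defs
  imports "HOL-Analysis.Analysis"
begin

text \<open>HOL-Analysis only provides real inner product spaces.\<close>

class complex_vector = real_vector +
  fixes scaleC :: "complex \<Rightarrow> 'a \<Rightarrow> 'a" (infixr \<open>*\<^sub>C\<close> 75)
  assumes scaleC_add_right: "a *\<^sub>C (x + y) = a *\<^sub>C x + a *\<^sub>C y"
    and scaleC_add_left: "(a + b) *\<^sub>C x = a *\<^sub>C x + b *\<^sub>C x"
    and scaleC_scaleC: "a *\<^sub>C (b *\<^sub>C x) = (a * b) *\<^sub>C x"
    and scaleC_one: "1 *\<^sub>C x = x"
    and scaleR_scaleC: "scaleR r x = complex_of_real r *\<^sub>C x"

class complex_inner = complex_vector + real_normed_vector +
  fixes cinner :: "'a \<Rightarrow> 'a \<Rightarrow> complex"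
  assumes cinner_commute: "cinner x y = cnj (cinner y x)"
    and cinner_add_left: "cinner (x + y) z = cinner x z + cinner y z"
    and cinner_scaleC_left: "cinner (a *\<^sub>C x) y = a * cinner x y"
    and cinner_self_real_nonneg: "Im (cinner x x) = 0 \<and> 0 \<le> Re (cinner x x)"
    and cinner_eq_zero_iff: "cinner x x = 0 \<longleftrightarrow> x = 0"
    and norm_eq_sqrt_cinner: "norm x = sqrt (Re (cinner x x))"

text \<open>A complex Hilbert space: a complete complex inner product space
(type class constraint complex_inner plus complete_space).\<close>

definition cspan :: "'a::complex_vector set \<Rightarrow> 'a set" where
  "cspan S = {y. \<exists>T c. finite T \<and> T \<subseteq> S \<and> y = (\<Sum>x\<in>T. c x *\<^sub>C x)}"

definition fin_dim :: "'a::complex_vector set \<Rightarrow> bool" where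
  "fin_dim K \<longleftrightarrow> (\<exists>S. finite S \<and> S \<subseteq> K \<and> cspan S = K)"

definition cdim :: "'a::complex_vector set \<Rightarrow> nat" where
  "cdim K = (LEAST n. \<exists>S. finite S \<and> S \<subseteq> K \<and> card S = n \<and> cspan S = K)"

definition separable_space :: "'a::topological_space itself \<Rightarrow> bool" where
  "separable_space _ \<longleftrightarrow> (\<exists>D::'a set. countable D \<and> closure D = UNIV)"

definition infinite_dimensional :: "'a::complex_vector itself \<Rightarrow> bool" where
  "infinite_dimensional _ \<longleftrightarrow> \<not> fin_dim (UNIV :: 'a set)"

definition analysis_op :: "(nat \<Rightarrow> 'a::complex_inner) \<Rightarrow> 'a \<Rightarrow> (nat \<Rightarrow> complex)" where
  "analysis_op f x = (\<lambda>n. cinner x (f n))"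

definition bessel_bound :: "(nat \<Rightarrow> 'a::complex_inner) \<Rightarrow> real \<Rightarrow> bool" where
  "bessel_bound f B \<longleftrightarrow>
     (\<forall>x. summable (\<lambda>n. (cmod (cinner x (f n)))\<^sup>2) \<and>
          (\<Sum>n. (cmod (cinner x (f n)))\<^sup>2) \<le> B * (norm x)\<^sup>2)"

definition bessel_seq :: "(nat \<Rightarrow> 'a::complex_inner) \<Rightarrow> bool" where
  "bessel_seq f \<longleftrightarrow> (\<exists>B. bessel_bound f B)"

definition optimal_bessel_bound :: "(nat \<Rightarrow> 'a::complex_inner) \<Rightarrow> real \<Rightarrow> bool" where
  "optimal_bessel_bound f B \<longleftrightarrow> bessel_bound f B \<and> (\<forall>B'. bessel_bound f B' \<longrightarrow> B \<le> B')"

definition frame :: "(nat \<Rightarrow> 'a::complex_inner) \<Rightarrow> bool" where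
  "frame f \<longleftrightarrow> (\<exists>A B. 0 < A \<and>
     (\<forall>x. summable (\<lambda>n. (cmod (cinner x (f n)))\<^sup>2) \<and>
          A * (norm x)\<^sup>2 \<le> (\<Sum>n. (cmod (cinner x (f n)))\<^sup>2) \<and>
          (\<Sum>n. (cmod (cinner x (f n)))\<^sup>2) \<le> B * (norm x)\<^sup>2))"

text \<open>Adjoint of the analysis operator of g (the synthesis operator):
V^* c = sum_n c_n g_n.\<close>
definition synthesis_op :: "(nat \<Rightarrow> 'a::complex_inner) \<Rightarrow> (nat \<Rightarrow> complex) \<Rightarrow> 'a" where
  "synthesis_op g c = (\<Sum>n. c n *\<^sub>C g n)"

definition compact_operator :: "('a::real_normed_vector \<Rightarrow> 'b::real_normed_vector) \<Rightarrow> bool" where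
  "compact_operator T \<longleftrightarrow> (\<forall>S. bounded S \<longrightarrow> compact (closure (T ` S)))"

text \<open>The sequence x_1,...,x_k,f_1,f_2,... (0-indexed: x 0, ..., x (k-1), f 0, f 1, ...).\<close>
definition prepend_seq :: "nat \<Rightarrow> (nat \<Rightarrow> 'a) \<Rightarrow> (nat \<Rightarrow> 'a) \<Rightarrow> (nat \<Rightarrow> 'a)" where
  "prepend_seq k x f = (\<lambda>n. if n < k then x n else f (n - k))"

definition orthonormal_basis_of :: "nat \<Rightarrow> (nat \<Rightarrow> 'a::complex_inner) \<Rightarrow> 'a set \<Rightarrow> bool" where
  "orthonormal_basis_of d w K \<longleftrightarrow>
     (\<forall>i<d. w i \<in> K) \<and>
     (\<forall>i<d. \<forall>j<d. cinner (w i) (w j) = (if i = j then 1 else 0)) \<and>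
     cspan (w ` {..<d}) = K"

end

theory Submission
  imports Defs "HOL-Analysis.L2_Norm"
begin

lemma scaleC_zero_left [simp]: "(0::complex) *\<^sub>C (x::'a::complex_vector) = 0"
  by (metis scaleR_scaleC of_real_0 scale_zero_left)
lemma scaleC_zero_right [simp]: "a *\<^sub>C (0::'a::complex_vector) = 0"
  by (metis add_cancel_right_right add_0 scaleC_add_right)
lemma scaleC_minus_left: "(- a) *\<^sub>C (x::'a::complex_vector) = - (a *\<^sub>C x)"
  by (metis add.right_inverse add_eq_0_iff scaleC_add_left scaleC_zero_left)
lemma scaleC_diff_right: "a *\<^sub>C ((x::'a::complex_vector) - y) = a *\<^sub>C x - a *\<^sub>C y"
proof -
  have "a *\<^sub>C (x - y) + a *\<^sub>C y = a *\<^sub>C x" by (metis diff_add_cancel scaleC_add_right)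
  then show ?thesis by (metis add_diff_cancel)
qed
lemma scaleC_sum_right: "a *\<^sub>C sum h A = (\<Sum>i\<in>A. a *\<^sub>C (h i::'a::complex_vector))"
  by (induction A rule: infinite_finite_induct) (auto simp: scaleC_add_right)
lemma scaleC_of_real: "complex_of_real r *\<^sub>C (x::'a::complex_vector) = r *\<^sub>R x"
  by (simp add: scaleR_scaleC)

lemma cinner_zero_left [simp]: "cinner 0 (y::'a::complex_inner) = 0"
  by (metis add_cancel_right_right add_0 cinner_add_left)
lemma cinner_scaleR_left: "cinner (r *\<^sub>R x) (y::'a::complex_inner) = complex_of_real r * cinner x y"
  by (simp add: scaleR_scaleC cinner_scaleC_left)
lemma cinner_minus_left: "cinner (- x) (y::'a::complex_inner) = - cinner x y"
proof -
  have "cinner (- x) y + cinner x y = 0"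
    by (simp only: cinner_add_left[symmetric] add.left_inverse cinner_zero_left)
  then show ?thesis by (simp add: eq_neg_iff_add_eq_0)
qed
lemma cinner_diff_left: "cinner (x - z) (y::'a::complex_inner) = cinner x y - cinner z y"
  by (simp only: diff_conv_add_uminus cinner_add_left cinner_minus_left)
lemma cinner_sum_left: "cinner (sum h A) (y::'a::complex_inner) = (\<Sum>i\<in>A. cinner (h i) y)"
  by (induction A rule: infinite_finite_induct) (auto simp: cinner_add_left)
lemma cnj_cinner: "cnj (cinner (x::'a::complex_inner) y) = cinner y x"
  by (simp only: cinner_commute[of y x] complex_cnj_cnj)
lemma cinner_zero_right [simp]: "cinner (x::'a::complex_inner) 0 = 0"
  by (simp only: cinner_commute[of x 0] cinner_zero_left complex_cnj_zero)
lemma cinner_add_right: "cinner (x::'a::complex_inner) (y + z) = cinner x y + cinner x z"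
  by (simp only: cinner_commute[of x "y+z"] cinner_add_left complex_cnj_add cnj_cinner)
lemma cinner_scaleC_right: "cinner (x::'a::complex_inner) (a *\<^sub>C y) = cnj a * cinner x y"
  by (simp only: cinner_commute[of x "a *\<^sub>C y"] cinner_scaleC_left complex_cnj_mult cnj_cinner)
lemma cinner_scaleR_right: "cinner (x::'a::complex_inner) (r *\<^sub>R y) = complex_of_real r * cinner x y"
  by (simp add: scaleR_scaleC cinner_scaleC_right)
lemma cinner_diff_right: "cinner (x::'a::complex_inner) (y - z) = cinner x y - cinner x z"
  by (simp only: cinner_commute[of x "y-z"] cinner_diff_left complex_cnj_diff cnj_cinner)
lemma cinner_sum_right: "cinner (y::'a::complex_inner) (sum h A) = (\<Sum>i\<in>A. cinner y (h i))"
  by (induction A rule: infinite_finite_induct) (auto simp: cinner_add_right)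

lemma cinner_self: "cinner (x::'a::complex_inner) x = complex_of_real ((norm x)\<^sup>2)"
proof -
  have "Im (cinner x x) = 0" "0 \<le> Re (cinner x x)" using cinner_self_real_nonneg by auto
  moreover have "(norm x)\<^sup>2 = Re (cinner x x)"
    using norm_eq_sqrt_cinner[of x] \<open>0 \<le> Re (cinner x x)\<close> by (metis real_sqrt_pow2)
  ultimately show ?thesis by (simp add: complex_eq_iff)
qed
lemma norm_sq_cinner: "(norm (x::'a::complex_inner))\<^sup>2 = Re (cinner x x)"
  by (simp add: cinner_self)

lemma cmod_cinner_sq: "(cmod (cinner x y))\<^sup>2 = Re (cinner x y * cnj (cinner x y))"
  by (simp add: complex_mult_cnj cmod_power2)

lemma Cauchy_Schwarz_c: "cmod (cinner (x::'a::complex_inner) y) \<le> norm x * norm y"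
proof (cases "y = 0")
  case True then show ?thesis by simp
next
  case False
  define c where "c = cinner x y"
  define nn where "nn = (norm y)\<^sup>2"
  define t where "t = c / complex_of_real nn"
  have yy: "cinner y y = complex_of_real nn" unfolding nn_def by (rule cinner_self)
  have ny: "nn > 0" using False by (simp add: nn_def)
  have yx: "cinner y x = cnj c" unfolding c_def by (rule cinner_commute)
  have e1: "complex_of_real ((norm (x - t *\<^sub>C y))\<^sup>2) = cinner (x - t *\<^sub>C y) (x - t *\<^sub>C y)"
    by (simp add: cinner_self)
  have e2: "cinner (x - t *\<^sub>C y) (x - t *\<^sub>C y) = cinner x x - cnj t * c - t * cnj c + t * cnj t * complex_of_real nn"
    by (simp add: cinner_diff_left cinner_diff_right cinner_scaleC_left cinner_scaleC_right yy yx c_def algebra_simps)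
  have e3: "cinner x x - cnj t * c - t * cnj c + t * cnj t * complex_of_real nn
      = cinner x x - complex_of_real ((cmod c)\<^sup>2 / nn)"
  proof -
    have "c * cnj c = complex_of_real ((cmod c)\<^sup>2)" using complex_norm_square[of c] by simp
    then show ?thesis using ny unfolding t_def
      by (simp add: field_simps)
  qed
  have "0 \<le> (norm (x - t *\<^sub>C y))\<^sup>2" by simp
  moreover have "(norm (x - t *\<^sub>C y))\<^sup>2 = (norm x)\<^sup>2 - (cmod c)\<^sup>2 / nn"
  proof -
    have "complex_of_real ((norm (x - t *\<^sub>C y))\<^sup>2) = complex_of_real ((norm x)\<^sup>2 - (cmod c)\<^sup>2 / nn)"
      unfolding e1 e2 e3 by (simp add: cinner_self)
    then show ?thesis using of_real_eq_iff by blast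
  qed
  ultimately have "0 \<le> (norm x)\<^sup>2 - (cmod (cinner x y))\<^sup>2 / (norm y)\<^sup>2"
    by (simp add: c_def nn_def)
  then have "(cmod (cinner x y))\<^sup>2 \<le> (norm x * norm y)\<^sup>2"
    using False by (simp add: field_simps power_mult_distrib)
  then show ?thesis by (rule power2_le_imp_le) simp
qed


section \<open>Subspaces and spans\<close>

definition csubspace :: "'a::complex_vector set \<Rightarrow> bool" where
  "csubspace K \<longleftrightarrow> 0 \<in> K \<and> (\<forall>x\<in>K. \<forall>y\<in>K. x + y \<in> K) \<and> (\<forall>a. \<forall>x\<in>K. a *\<^sub>C x \<in> K)"

lemma csubspace_0: "csubspace K \<Longrightarrow> 0 \<in> K" by (simp add: csubspace_def)
lemma csubspace_add: "csubspace K \<Longrightarrow> x \<in> K \<Longrightarrow> y \<in> K \<Longrightarrow> x + y \<in> K"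
  by (simp add: csubspace_def)
lemma csubspace_scaleC: "csubspace K \<Longrightarrow> x \<in> K \<Longrightarrow> a *\<^sub>C x \<in> K"
  by (simp add: csubspace_def)
lemma csubspace_scaleR: "csubspace K \<Longrightarrow> x \<in> K \<Longrightarrow> r *\<^sub>R x \<in> K"
  by (simp add: csubspace_def scaleR_scaleC)
lemma csubspace_diff: "csubspace K \<Longrightarrow> x \<in> K \<Longrightarrow> y \<in> K \<Longrightarrow> x - y \<in> K"
proof -
  assume K: "csubspace K" "x \<in> K" "y \<in> K"
  have "- y \<in> K" using K csubspace_scaleR[of K y "-1"] by simp
  then show ?thesis using K csubspace_add[of K x "- y"] by simp
qed
lemma csubspace_sum: "csubspace K \<Longrightarrow> (\<And>i. i \<in> A \<Longrightarrow> h i \<in> K) \<Longrightarrow> sum h A \<in> K"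
  by (induction A rule: infinite_finite_induct) (auto simp: csubspace_0 csubspace_add)

lemma cspan_subset: "csubspace K \<Longrightarrow> S \<subseteq> K \<Longrightarrow> cspan S \<subseteq> K"
  unfolding cspan_def by (auto intro!: csubspace_sum csubspace_scaleC)

lemma cspan_superset: "S \<subseteq> cspan S"
proof
  fix s assume "s \<in> S"
  then show "s \<in> cspan S" unfolding cspan_def
    by (intro CollectI exI[of _ "{s}"] exI[of _ "\<lambda>_. 1"]) (simp add: scaleC_one)
qed

lemma cspan_mono: "S \<subseteq> S' \<Longrightarrow> cspan S \<subseteq> cspan S'"
  unfolding cspan_def by blast

lemma cspanI: "finite T \<Longrightarrow> T \<subseteq> S \<Longrightarrow> y = (\<Sum>x\<in>T. c x *\<^sub>C x) \<Longrightarrow> y \<in> cspan S"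
  unfolding cspan_def by (intro CollectI exI conjI)
lemma cspanE: assumes "y \<in> cspan S"
  obtains T c where "finite T" "T \<subseteq> S" "y = (\<Sum>x\<in>T. c x *\<^sub>C x)"
  using assms unfolding cspan_def by (auto simp only: mem_Collect_eq)

lemma csubspace_cspan: "csubspace (cspan S)"
  unfolding csubspace_def
proof (intro conjI ballI allI)
  show "0 \<in> cspan S" by (rule cspanI[of "{}" _ _ "\<lambda>_. 0"]) simp_all
next
  fix x y assume x: "x \<in> cspan S" and y: "y \<in> cspan S"
  obtain T1 c1 where t1: "finite T1" "T1 \<subseteq> S" "x = (\<Sum>x\<in>T1. c1 x *\<^sub>C x)" using x by (rule cspanE)
  obtain T2 c2 where t2: "finite T2" "T2 \<subseteq> S" "y = (\<Sum>x\<in>T2. c2 x *\<^sub>C x)" using y by (rule cspanE)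
  define c where "c = (\<lambda>v. (if v \<in> T1 then c1 v else 0) + (if v \<in> T2 then c2 v else 0))"
  have fU: "finite (T1 \<union> T2)" using t1 t2 by simp
  have "(\<Sum>v\<in>T1 \<union> T2. c v *\<^sub>C v) = (\<Sum>v\<in>T1 \<union> T2. (if v \<in> T1 then c1 v *\<^sub>C v else 0))
      + (\<Sum>v\<in>T1 \<union> T2. (if v \<in> T2 then c2 v *\<^sub>C v else 0))"
  proof -
    have "c v *\<^sub>C v = (if v \<in> T1 then c1 v *\<^sub>C v else 0) + (if v \<in> T2 then c2 v *\<^sub>C v else 0)" for v
      unfolding c_def by (simp add: scaleC_add_left)
    then show ?thesis by (simp only: sum.distrib)
  qed
  also have "(\<Sum>v\<in>T1 \<union> T2. (if v \<in> T1 then c1 v *\<^sub>C v else 0)) = x"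
  proof -
    have "(T1 \<union> T2) \<inter> T1 = T1" by blast
    with sum.inter_restrict[OF fU, of "\<lambda>v. c1 v *\<^sub>C v" T1] show ?thesis using t1(3) by simp
  qed
  also have "(\<Sum>v\<in>T1 \<union> T2. (if v \<in> T2 then c2 v *\<^sub>C v else 0)) = y"
  proof -
    have "(T1 \<union> T2) \<inter> T2 = T2" by blast
    with sum.inter_restrict[OF fU, of "\<lambda>v. c2 v *\<^sub>C v" T2] show ?thesis using t2(3) by simp
  qed
  finally have "x + y = (\<Sum>v\<in>T1 \<union> T2. c v *\<^sub>C v)" by (rule sym)
  moreover have "T1 \<union> T2 \<subseteq> S" using t1 t2 by blast
  ultimately show "x + y \<in> cspan S" using fU by (intro cspanI)
next
  fix a x assume "x \<in> cspan S"
  then obtain T c where t: "finite T" "T \<subseteq> S" "x = (\<Sum>x\<in>T. c x *\<^sub>C x)" by (rule cspanE)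
  have "a *\<^sub>C x = (\<Sum>v\<in>T. (a * c v) *\<^sub>C v)" unfolding t(3) scaleC_sum_right scaleC_scaleC ..
  then show "a *\<^sub>C x \<in> cspan S" using t(1,2) by (intro cspanI)
qed

lemma ortho_span:
  assumes "\<And>e. e \<in> E \<Longrightarrow> cinner x e = 0" "y \<in> cspan E"
  shows "cinner y x = 0" "cinner x y = 0"
proof -
  obtain T c where t: "finite T" "T \<subseteq> E" "y = (\<Sum>x\<in>T. c x *\<^sub>C x)" using assms(2) by (rule cspanE)
  have "cinner y x = (\<Sum>v\<in>T. c v * cinner v x)" using t by (simp add: cinner_sum_left cinner_scaleC_left)
  also have "\<dots> = 0"
  proof (intro sum.neutral ballI)
    fix v assume "v \<in> T"
    then have "cinner x v = 0" using t(2) assms(1) by blast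
    then have "cinner v x = 0" using cnj_cinner[of x v] by simp
    then show "c v * cinner v x = 0" by simp
  qed
  finally show "cinner y x = 0" .
  then show "cinner x y = 0" using cnj_cinner[of y x] by simp
qed

section \<open>Orthonormal sets and projections\<close>

definition orthonormal :: "'a::complex_inner set \<Rightarrow> bool" where
  "orthonormal E \<longleftrightarrow> finite E \<and> (\<forall>e\<in>E. cinner e e = 1) \<and> (\<forall>e\<in>E. \<forall>e'\<in>E. e \<noteq> e' \<longrightarrow> cinner e e' = 0)"

definition proj :: "'a::complex_inner set \<Rightarrow> 'a \<Rightarrow> 'a" where
  "proj E y = (\<Sum>e\<in>E. cinner y e *\<^sub>C e)"

lemma proj_in_cspan: "finite E \<Longrightarrow> proj E y \<in> cspan E"
  unfolding proj_def cspan_def by blast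

lemma cinner_proj: assumes "orthonormal E" "e \<in> E" shows "cinner (proj E y) e = cinner y e"
proof -
  have "cinner (proj E y) e = (\<Sum>e'\<in>E. cinner y e' * cinner e' e)"
    unfolding proj_def by (simp add: cinner_sum_left cinner_scaleC_left)
  also have "\<dots> = (\<Sum>e'\<in>E. if e' = e then cinner y e else 0)"
    using assms unfolding orthonormal_def by (intro sum.cong) auto
  also have "\<dots> = cinner y e" using assms unfolding orthonormal_def by simp
  finally show ?thesis .
qed

lemma cinner_resid: "orthonormal E \<Longrightarrow> e \<in> E \<Longrightarrow> cinner (y - proj E y) e = 0"
  by (simp add: cinner_diff_left cinner_proj)

lemma pythag: assumes "cinner a b = 0" shows "(norm (a + b))\<^sup>2 = (norm a)\<^sup>2 + (norm (b::'a::complex_inner))\<^sup>2"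
proof -
  have ba: "cinner b a = 0" using assms cnj_cinner[of a b] by simp
  have "cinner (a + b) (a + b) = cinner a a + cinner b b"
    by (simp add: cinner_add_left cinner_add_right assms ba)
  then have "complex_of_real ((norm (a + b))\<^sup>2) = complex_of_real ((norm a)\<^sup>2 + (norm b)\<^sup>2)"
    by (simp only: cinner_self of_real_add)
  then show ?thesis by (simp only: of_real_eq_iff)
qed

lemma norm_proj_sq: assumes "orthonormal E" shows "(norm (proj E y))\<^sup>2 = (\<Sum>e\<in>E. (cmod (cinner y e))\<^sup>2)"
proof -
  have pl: "cinner (proj E y) p = (\<Sum>e\<in>E. cinner y e * cinner e p)" for p
    unfolding proj_def by (simp add: cinner_sum_left cinner_scaleC_left)
  have "cinner (proj E y) (proj E y) = (\<Sum>e\<in>E. cinner y e * cinner e (proj E y))"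
    by (rule pl)
  also have "\<dots> = (\<Sum>e\<in>E. complex_of_real ((cmod (cinner y e))\<^sup>2))"
  proof (intro sum.cong refl)
    fix e assume "e \<in> E"
    then have "cinner e (proj E y) = cnj (cinner y e)" using assms cinner_proj[of E e y] cnj_cinner[of "proj E y" e] by simp
    then show "cinner y e * cinner e (proj E y) = complex_of_real ((cmod (cinner y e))\<^sup>2)"
      using complex_norm_square[of "cinner y e"] by simp
  qed
  finally have "complex_of_real ((norm (proj E y))\<^sup>2) = complex_of_real (\<Sum>e\<in>E. (cmod (cinner y e))\<^sup>2)"
    by (simp only: cinner_self of_real_sum)
  then show ?thesis by (simp only: of_real_eq_iff)
qed

lemma norm_decomp: assumes "orthonormal E"
  shows "(norm y)\<^sup>2 = (\<Sum>e\<in>E. (cmod (cinner y e))\<^sup>2) + (norm (y - proj E y))\<^sup>2"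
proof -
  have fE: "finite E" using assms unfolding orthonormal_def by simp
  have "cinner (proj E y) (y - proj E y) = 0"
    by (rule ortho_span(1)[of E "y - proj E y" "proj E y"]) (use assms cinner_resid proj_in_cspan[OF fE] in auto)
  then have "(norm (proj E y + (y - proj E y)))\<^sup>2 = (norm (proj E y))\<^sup>2 + (norm (y - proj E y))\<^sup>2"
    by (rule pythag)
  moreover have "proj E y + (y - proj E y) = y" by simp
  ultimately show ?thesis by (simp only: norm_proj_sq[OF assms])
qed

lemma bessel_fin: "orthonormal E \<Longrightarrow> (\<Sum>e\<in>E. (cmod (cinner y e))\<^sup>2) \<le> (norm y)\<^sup>2"
  using norm_decomp[of E y] by simp

lemma normalize_ortho:
  assumes E: "orthonormal E" and z: "z \<noteq> 0" and o: "\<And>e. e \<in> E \<Longrightarrow> cinner z e = 0"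
  shows "orthonormal (insert ((1 / norm z) *\<^sub>R z) E)" "(1 / norm z) *\<^sub>R z \<notin> E"
proof -
  define u where "u = (1 / norm z) *\<^sub>R z"
  have uu: "cinner u u = 1" unfolding u_def
    using z by (simp add: cinner_scaleR_left cinner_scaleR_right cinner_self power2_eq_square)
  have ue: "cinner u e = 0" if "e \<in> E" for e
    unfolding u_def using o[OF that] by (simp add: cinner_scaleR_left)
  have eu: "cinner e u = 0" if "e \<in> E" for e using ue[OF that] cnj_cinner[of u e] by simp
  show "orthonormal (insert ((1 / norm z) *\<^sub>R z) E)"
    using E uu ue eu unfolding orthonormal_def u_def[symmetric] by auto
  show "(1 / norm z) *\<^sub>R z \<notin> E" using uu ue unfolding u_def[symmetric] by force
qed

lemma gram_schmidt: "finite S \<Longrightarrow> \<exists>E. orthonormal E \<and> cspan E = cspan S"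
proof (induction S rule: finite_induct)
  case empty
  then show ?case by (intro exI[of _ "{}"]) (simp add: orthonormal_def)
next
  case (insert s S)
  then obtain E where E: "orthonormal E" "cspan E = cspan S" by blast
  have fE: "finite E" using E unfolding orthonormal_def by simp
  have sub1: "cspan S \<subseteq> cspan (insert s S)" by (rule cspan_mono) blast
  have sins: "s \<in> cspan (insert s S)" using cspan_superset by blast
  define z where "z = s - proj E s"
  show ?case
  proof (cases "z = 0")
    case True
    then have "s \<in> cspan E" using proj_in_cspan[OF fE, of s] unfolding z_def by simp
    then have "insert s S \<subseteq> cspan E" using E cspan_superset by blast
    then have "cspan (insert s S) \<subseteq> cspan E" by (rule cspan_subset[OF csubspace_cspan])
    then show ?thesis using E sub1 by blast
  next
    case False
    define u where "u = (1 / norm z) *\<^sub>R z"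
    have on: "orthonormal (insert u E)"
      using normalize_ortho[OF E(1) False] cinner_resid[OF E(1)] unfolding u_def z_def by blast
    have "u \<in> cspan (insert s S)" unfolding u_def z_def
      using sins proj_in_cspan[OF fE, of s] E(2) sub1
      by (intro csubspace_scaleR csubspace_diff csubspace_cspan) auto
    moreover have "E \<subseteq> cspan (insert s S)" using E(2) sub1 cspan_superset by blast
    ultimately have a: "cspan (insert u E) \<subseteq> cspan (insert s S)"
      by (intro cspan_subset csubspace_cspan) auto
    have sub2: "cspan E \<subseteq> cspan (insert u E)" by (rule cspan_mono) blast
    have "s = norm z *\<^sub>R u + proj E s" unfolding u_def z_def using False z_def by simp
    moreover have "norm z *\<^sub>R u \<in> cspan (insert u E)"
      by (intro csubspace_scaleR csubspace_cspan) (use cspan_superset in blast)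
    moreover have "proj E s \<in> cspan (insert u E)" using proj_in_cspan[OF fE, of s] sub2 by blast
    ultimately have "s \<in> cspan (insert u E)"
      using csubspace_add[OF csubspace_cspan, of "norm z *\<^sub>R u" "insert u E" "proj E s"] by simp
    moreover have "S \<subseteq> cspan (insert u E)" using E(2) sub2 cspan_superset by blast
    ultimately have "cspan (insert s S) \<subseteq> cspan (insert u E)"
      by (intro cspan_subset csubspace_cspan) auto
    then show ?thesis using a on by blast
  qed
qed


lemma synth_fin:
  fixes g :: "nat \<Rightarrow> 'a::complex_inner"
  assumes bg: "bessel_bound g Bg" and F: "finite F"
  shows "norm (\<Sum>n\<in>F. c n *\<^sub>C g n) \<le> sqrt (max Bg 0) * sqrt (\<Sum>n\<in>F. (cmod (c n))\<^sup>2)"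
proof -
  define z where "z = (\<Sum>n\<in>F. c n *\<^sub>C g n)"
  define Lc where "Lc = sqrt (\<Sum>n\<in>F. (cmod (c n))\<^sup>2)"
  define B' where "B' = max Bg 0"
  have Lc0: "0 \<le> Lc" unfolding Lc_def by (simp add: sum_nonneg)
  have a1: "(norm z)\<^sup>2 \<le> cmod (cinner z z)"
    using norm_sq_cinner[of z] complex_Re_le_cmod[of "cinner z z"] by linarith
  have a2: "cinner z z = (\<Sum>n\<in>F. c n * cinner (g n) z)"
  proof -
    have "cinner z p = (\<Sum>n\<in>F. c n * cinner (g n) p)" for p
      unfolding z_def by (simp add: cinner_sum_left cinner_scaleC_left)
    then show ?thesis .
  qed
  have a3: "cmod (\<Sum>n\<in>F. c n * cinner (g n) z) \<le> (\<Sum>n\<in>F. \<bar>cmod (c n)\<bar> * \<bar>cmod (cinner z (g n))\<bar>)"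
  proof -
    have "cmod (\<Sum>n\<in>F. c n * cinner (g n) z) \<le> (\<Sum>n\<in>F. cmod (c n * cinner (g n) z))" by (rule norm_sum)
    also have "\<dots> = (\<Sum>n\<in>F. \<bar>cmod (c n)\<bar> * \<bar>cmod (cinner z (g n))\<bar>)"
    proof (intro sum.cong refl)
      fix n
      have "cmod (cinner (g n) z) = cmod (cinner z (g n))"
        using cinner_commute[of "g n" z] by (simp only: complex_mod_cnj)
      then show "cmod (c n * cinner (g n) z) = \<bar>cmod (c n)\<bar> * \<bar>cmod (cinner z (g n))\<bar>"
        by (simp add: norm_mult)
    qed
    finally show ?thesis .
  qed
  have a4: "(\<Sum>n\<in>F. \<bar>cmod (c n)\<bar> * \<bar>cmod (cinner z (g n))\<bar>) \<le> L2_set (\<lambda>n. cmod (c n)) F * L2_set (\<lambda>n. cmod (cinner z (g n))) F"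
    by (rule L2_set_mult_ineq)
  have a5: "L2_set (\<lambda>n. cmod (c n)) F = Lc" unfolding Lc_def L2_set_def by simp
  have a6: "L2_set (\<lambda>n. cmod (cinner z (g n))) F \<le> sqrt B' * norm z"
  proof -
    have s: "summable (\<lambda>n. (cmod (cinner z (g n)))\<^sup>2)" and le: "(\<Sum>n. (cmod (cinner z (g n)))\<^sup>2) \<le> Bg * (norm z)\<^sup>2"
      using bg unfolding bessel_bound_def by auto
    have "(\<Sum>n\<in>F. (cmod (cinner z (g n)))\<^sup>2) \<le> (\<Sum>n. (cmod (cinner z (g n)))\<^sup>2)"
      by (rule sum_le_suminf[OF s F]) simp
    also have "\<dots> \<le> B' * (norm z)\<^sup>2" using le unfolding B'_def
      by (meson max.cobounded1 mult_right_mono order_trans zero_le_power2)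
    finally have "L2_set (\<lambda>n. cmod (cinner z (g n))) F \<le> sqrt (B' * (norm z)\<^sup>2)"
      unfolding L2_set_def by simp
    also have "\<dots> = sqrt B' * norm z" by (simp add: real_sqrt_mult)
    finally show ?thesis .
  qed
  have a7: "Lc * L2_set (\<lambda>n. cmod (cinner z (g n))) F \<le> Lc * (sqrt B' * norm z)"
    using a6 Lc0 by (rule mult_left_mono)
  have *: "norm z * norm z \<le> (Lc * sqrt B') * norm z"
    using a1 a2 a3 a4 a5 a7 by (simp add: power2_eq_square mult.assoc)
  show ?thesis
  proof (cases "norm z = 0")
    case True then show ?thesis by (simp add: z_def[symmetric] sum_nonneg)
  next
    case False
    then have "norm z > 0" by simp
    with * have "norm z \<le> Lc * sqrt B'" using mult_le_cancel_right_pos by blast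
    then show ?thesis unfolding z_def Lc_def B'_def by (simp add: mult.commute)
  qed
qed


lemma synth_bound:
  fixes g :: "nat \<Rightarrow> 'a::{complex_inner, complete_space}"
  assumes bg: "bessel_bound g Bg" and sc: "summable (\<lambda>n. (cmod (c n))\<^sup>2)"
  shows "norm (synthesis_op g c) \<le> sqrt (max Bg 0) * sqrt (\<Sum>n. (cmod (c n))\<^sup>2)"
proof -
  define B' where "B' = max Bg 0"
  define X where "X = (\<lambda>m. \<Sum>n<m. c n *\<^sub>C g n)"
  have B'0: "0 \<le> B'" unfolding B'_def by simp
  have diff: "norm (X n - X m) \<le> sqrt B' * sqrt (\<Sum>i\<in>{m..<n}. (cmod (c i))\<^sup>2)" if "m \<le> n" for m n
  proof -
    have "X n - X m = (\<Sum>i\<in>{m..<n}. c i *\<^sub>C g i)"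
      unfolding X_def lessThan_atLeast0 using sum_diff_nat_ivl[of 0 m n] that by simp
    then show ?thesis using synth_fin[OF bg, of "{m..<n}" c] unfolding B'_def by simp
  qed
  have "Cauchy X"
  proof (rule CauchyI)
    fix e :: real assume e: "0 < e"
    define e' where "e' = e\<^sup>2 / (B' + 1)"
    have e': "0 < e'" unfolding e'_def using e B'0 by simp
    obtain N where N: "\<And>m n. m \<ge> N \<Longrightarrow> norm (\<Sum>i\<in>{m..<n}. (cmod (c i))\<^sup>2) < e'"
      using sc e' unfolding summable_Cauchy by blast
    have key: "norm (X n - X m) < e" if "N \<le> m" "m \<le> n" for m n
    proof -
      have s0: "0 \<le> (\<Sum>i\<in>{m..<n}. (cmod (c i))\<^sup>2)" by (simp add: sum_nonneg)
      have s1: "(\<Sum>i\<in>{m..<n}. (cmod (c i))\<^sup>2) < e'" using N[OF that(1), of n] s0 by simp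
      have "sqrt B' * sqrt (\<Sum>i\<in>{m..<n}. (cmod (c i))\<^sup>2) \<le> sqrt (B' + 1) * sqrt (\<Sum>i\<in>{m..<n}. (cmod (c i))\<^sup>2)"
        by (intro mult_right_mono) (simp_all add: s0)
      also have "\<dots> < sqrt (B' + 1) * sqrt e'"
        using s1 s0 B'0 by (intro mult_strict_left_mono) simp_all
      also have "sqrt (B' + 1) * sqrt e' = e"
        unfolding e'_def using B'0 e by (simp add: real_sqrt_mult[symmetric] real_sqrt_divide)
      finally show ?thesis using diff[OF that(2)] by linarith
    qed
    show "\<exists>M. \<forall>m\<ge>M. \<forall>n\<ge>M. norm (X m - X n) < e"
    proof (intro exI allI impI)
      fix m n assume "N \<le> m" "N \<le> n"
      then show "norm (X m - X n) < e"
        using key[of m n] key[of n m] norm_minus_commute[of "X m" "X n"] by (cases "m \<le> n") auto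
    qed
  qed
  then obtain L where L: "X \<longlonglongrightarrow> L" using Cauchy_convergent_iff convergent_def by blast
  then have sm: "summable (\<lambda>n. c n *\<^sub>C g n)" unfolding summable_def sums_def X_def by blast
  have "(\<lambda>m. norm (X m)) \<longlonglongrightarrow> norm (synthesis_op g c)"
    unfolding synthesis_op_def X_def by (intro tendsto_norm summable_LIMSEQ sm)
  moreover have "\<forall>m\<ge>0. norm (X m) \<le> sqrt B' * sqrt (\<Sum>n. (cmod (c n))\<^sup>2)"
  proof (intro allI impI)
    fix m :: nat
    have "norm (X m) \<le> sqrt B' * sqrt (\<Sum>n<m. (cmod (c n))\<^sup>2)"
      unfolding X_def B'_def by (rule synth_fin[OF bg]) simp
    also have "\<dots> \<le> sqrt B' * sqrt (\<Sum>n. (cmod (c n))\<^sup>2)"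
      by (intro mult_left_mono real_sqrt_le_mono sum_le_suminf[OF sc]) (simp_all add: B'0)
    finally show "norm (X m) \<le> sqrt B' * sqrt (\<Sum>n. (cmod (c n))\<^sup>2)" .
  qed
  ultimately show ?thesis unfolding B'_def by (intro LIMSEQ_le_const2) auto
qed


lemma orth_dist:
  assumes "orthonormal E" "e \<in> E" "e' \<in> E" "e \<noteq> e'"
  shows "1 \<le> norm (e - e')"
proof -
  have ee: "cinner e e = 1" "cinner e' e' = 1" "cinner e e' = 0" "cinner e' e = 0"
    using assms unfolding orthonormal_def by auto
  have "cinner (e - e') (e - e') = 2"
    by (simp add: cinner_diff_left cinner_diff_right ee)
  then have "complex_of_real ((norm (e - e'))\<^sup>2) = complex_of_real 2" by (simp only: cinner_self of_real_numeral)
  then have "(norm (e - e'))\<^sup>2 = 2" by (simp only: of_real_eq_iff)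
  then have "1\<^sup>2 \<le> (norm (e - e'))\<^sup>2" by simp
  then show ?thesis by (rule power2_le_imp_le) simp
qed

lemma big_orthonormal:
  assumes K: "csubspace K" and nf: "\<not> fin_dim K"
  shows "\<exists>E. orthonormal E \<and> E \<subseteq> K \<and> card E = n"
proof (induction n)
  case 0
  show ?case by (intro exI[of _ "{}"]) (simp add: orthonormal_def)
next
  case (Suc n)
  then obtain E where E: "orthonormal E" "E \<subseteq> K" "card E = n" by blast
  have fE: "finite E" using E unfolding orthonormal_def by simp
  have sub: "cspan E \<subseteq> K" by (rule cspan_subset[OF K E(2)])
  have "cspan E \<noteq> K" using nf fE E(2) unfolding fin_dim_def by blast
  then obtain y where y: "y \<in> K" "y \<notin> cspan E" using sub by blast
  define z where "z = y - proj E y"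
  have zK: "z \<in> K" unfolding z_def using y sub proj_in_cspan[OF fE, of y]
    by (intro csubspace_diff[OF K]) auto
  have z0: "z \<noteq> 0" using y proj_in_cspan[OF fE, of y] unfolding z_def by auto
  have zo: "\<And>e. e \<in> E \<Longrightarrow> cinner z e = 0" unfolding z_def by (rule cinner_resid[OF E(1)])
  define u where "u = (1 / norm z) *\<^sub>R z"
  have "orthonormal (insert u E)" "u \<notin> E" using normalize_ortho[OF E(1) z0 zo] unfolding u_def by auto
  moreover have "u \<in> K" unfolding u_def by (rule csubspace_scaleR[OF K zK])
  ultimately show ?case using E fE by (intro exI[of _ "insert u E"]) auto
qed

lemma fin_dim_of_compact_id:
  fixes T :: "'a::complex_inner \<Rightarrow> 'a"
  assumes K: "csubspace K" and T: "compact_operator T" and id: "\<And>x. x \<in> K \<Longrightarrow> T x = x"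
  shows "fin_dim K"
proof (rule ccontr)
  assume nf: "\<not> fin_dim K"
  define S where "S = {x \<in> K. norm x \<le> 1}"
  have "bounded S" unfolding S_def by (rule boundedI[of _ 1]) simp
  then have cS: "compact (closure (T ` S))" using T unfolding compact_operator_def by blast
  have TS: "T ` S = S" using id unfolding S_def by force
  have cov: "closure S \<subseteq> (\<Union>c\<in>closure S. ball c (1/2))" by force
  obtain C where C: "C \<subseteq> closure S" "finite C" "closure S \<subseteq> (\<Union>c\<in>C. ball c (1/2))"
    using compactE_image[OF cS[unfolded TS], of "closure S" "\<lambda>c. ball c (1/2)"] cov by auto
  obtain E where E: "orthonormal E" "E \<subseteq> K" "card E = Suc (card C)"
    using big_orthonormal[OF K nf] by blast
  have ES: "E \<subseteq> closure S"
  proof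
    fix e assume "e \<in> E"
    then have "e \<in> K" "norm e = 1" using E unfolding orthonormal_def
      by (auto simp: norm_eq_sqrt_cinner)
    then show "e \<in> closure S" unfolding S_def using closure_subset by fastforce
  qed
  have "\<forall>e\<in>E. \<exists>c\<in>C. e \<in> ball c (1/2)" using ES C(3) by blast
  then obtain h where h: "\<And>e. e \<in> E \<Longrightarrow> h e \<in> C \<and> e \<in> ball (h e) (1/2)" by metis
  have "inj_on h E"
  proof (rule inj_onI)
    fix e e' assume ee: "e \<in> E" "e' \<in> E" "h e = h e'"
    show "e = e'"
    proof (rule ccontr)
      assume ne: "e \<noteq> e'"
      have "dist e e' \<le> dist (h e) e + dist (h e) e'" by (rule dist_triangle3)
      also have "\<dots> < 1" using h[OF ee(1)] h[OF ee(2)] ee(3) by (simp add: dist_commute)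
      finally have "norm (e - e') < 1" by (simp add: dist_norm)
      then show False using orth_dist[OF E(1) ee(1,2) ne] by simp
    qed
  qed
  then have "card E \<le> card C" using h C(2) by (intro card_inj_on_le) auto
  then show False using E(3) by simp
qed


lemma Q_scale:
  assumes "bessel_bound f Bf"
  shows "(\<Sum>n. (cmod (cinner (r *\<^sub>R q) (f n)))\<^sup>2) = r\<^sup>2 * (\<Sum>n. (cmod (cinner q (f n)))\<^sup>2)"
proof -
  have s: "summable (\<lambda>n. (cmod (cinner q (f n)))\<^sup>2)" using assms unfolding bessel_bound_def by blast
  have "(cmod (cinner (r *\<^sub>R q) (f n)))\<^sup>2 = r\<^sup>2 * (cmod (cinner q (f n)))\<^sup>2" for n
    by (simp add: cinner_scaleR_left norm_mult power_mult_distrib)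
  then show ?thesis using suminf_mult[OF s, of "r\<^sup>2"] by simp
qed

lemma term_le_Q:
  assumes "bessel_bound f Bf"
  shows "(cmod (cinner q (f m)))\<^sup>2 \<le> (\<Sum>n. (cmod (cinner q (f n)))\<^sup>2)"
proof -
  have s: "summable (\<lambda>n. (cmod (cinner q (f n)))\<^sup>2)" using assms unfolding bessel_bound_def by blast
  show ?thesis using sum_le_suminf[OF s, of "{m}"] by simp
qed

lemma bounded_linear_cinner_left: "bounded_linear (\<lambda>x. cinner (x::'a::complex_inner) e)"
proof (rule bounded_linear_intro[where K = "norm e"])
  show "cinner (x + y) e = cinner x e + cinner y e" for x y by (rule cinner_add_left)
  show "cinner (r *\<^sub>R x) e = r *\<^sub>R cinner x e" for r x by (simp add: cinner_scaleR_left scaleR_conv_of_real)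
  show "norm (cinner x e) \<le> norm x * norm e" for x by (rule Cauchy_Schwarz_c)
qed

lemma lower_bound:
  fixes f g :: "nat \<Rightarrow> 'a::{complex_inner,complete_space}"
  assumes bf: "bessel_bound f Bf" and bg: "bessel_bound g Bg"
    and T: "compact_operator (\<lambda>x. x - synthesis_op g (analysis_op f x))"
    and W: "orthonormal W" and KW: "cspan W = {x. analysis_op f x = (\<lambda>n. 0)}"
  shows "\<exists>c>0. \<forall>q. (\<forall>e\<in>W. cinner q e = 0) \<longrightarrow> c * (norm q)\<^sup>2 \<le> (\<Sum>n. (cmod (cinner q (f n)))\<^sup>2)"
proof (rule ccontr)
  define Q where "Q = (\<lambda>q. (\<Sum>n. (cmod (cinner q (f n)))\<^sup>2))"
  define TT where "TT = (\<lambda>x. x - synthesis_op g (analysis_op f x))"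
  assume "\<not> ?thesis"
  then have neg: "\<And>c. c > 0 \<Longrightarrow> \<exists>q. (\<forall>e\<in>W. cinner q e = 0) \<and> Q q < c * (norm q)\<^sup>2"
    unfolding Q_def by (simp add: not_le)
  have ex: "\<exists>u. norm u = 1 \<and> (\<forall>e\<in>W. cinner u e = 0) \<and> Q u < inverse (real (Suc n))" for n
  proof -
    obtain q where q: "\<forall>e\<in>W. cinner q e = 0" "Q q < inverse (real (Suc n)) * (norm q)\<^sup>2"
      using neg[of "inverse (real (Suc n))"] by auto
    have Q0: "0 \<le> Q q" unfolding Q_def using bf unfolding bessel_bound_def by (simp add: suminf_nonneg)
    have q0: "q \<noteq> 0" using q(2) Q0 by auto
    define u where "u = (1 / norm q) *\<^sub>R q"
    have "norm u = 1" unfolding u_def using q0 by simp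
    moreover have "\<forall>e\<in>W. cinner u e = 0" unfolding u_def using q(1) by (simp add: cinner_scaleR_left)
    moreover have "Q u < inverse (real (Suc n))"
    proof -
      have "Q u = (1 / norm q)\<^sup>2 * Q q" unfolding u_def Q_def by (rule Q_scale[OF bf])
      also have "\<dots> < (1 / norm q)\<^sup>2 * (inverse (real (Suc n)) * (norm q)\<^sup>2)"
        using q(2) q0 by (intro mult_strict_left_mono) simp_all
      also have "\<dots> = inverse (real (Suc n))" using q0 by (simp add: power2_eq_square field_simps)
      finally show ?thesis .
    qed
    ultimately show ?thesis by blast
  qed
  have "\<forall>n. \<exists>u. norm u = 1 \<and> (\<forall>e\<in>W. cinner u e = 0) \<and> Q u < inverse (real (Suc n))"
    using ex by blast
  then obtain u where u0: "\<forall>n. norm (u n) = 1 \<and> (\<forall>e\<in>W. cinner (u n) e = 0) \<and> Q (u n) < inverse (real (Suc n))"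
    using choice[of "\<lambda>n u. norm u = 1 \<and> (\<forall>e\<in>W. cinner u e = 0) \<and> Q u < inverse (real (Suc n))"] by blast
  then have u: "\<And>n. norm (u n) = 1" "\<And>n. \<forall>e\<in>W. cinner (u n) e = 0"
    "\<And>n. Q (u n) < inverse (real (Suc n))" by auto
  have Q0: "\<And>q. 0 \<le> Q q" unfolding Q_def using bf unfolding bessel_bound_def by (simp add: suminf_nonneg)
  have "bounded (range u)" by (rule boundedI[of _ 1]) (use u(1) in auto)
  moreover have "\<forall>S. bounded S \<longrightarrow> compact (closure (TT ` S))"
    using T unfolding compact_operator_def TT_def .
  ultimately have cT: "compact (closure (TT ` range u))" by simp
  have "\<forall>n. TT (u n) \<in> closure (TT ` range u)" using closure_subset[of "TT ` range u"] by auto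
  then obtain l r where lr0: "l \<in> closure (TT ` range u)" "strict_mono r" "((\<lambda>n. TT (u n)) \<circ> r) \<longlonglongrightarrow> l"
    by (rule seq_compactE[OF compact_imp_seq_compact[OF cT]])
  then have lr: "strict_mono r" "((\<lambda>n. TT (u n)) \<circ> r) \<longlonglongrightarrow> l" by auto
  define V where "V = (\<lambda>n. synthesis_op g (analysis_op f (u n)))"
  have V0: "V \<longlonglongrightarrow> 0"
  proof (rule Lim_null_comparison)
    show "\<forall>\<^sub>F n in sequentially. norm (V n) \<le> sqrt (max Bg 0) * sqrt (inverse (real (Suc n)))"
    proof (intro always_eventually allI)
      fix n
      have sc: "summable (\<lambda>m. (cmod (analysis_op f (u n) m))\<^sup>2)"
        using bf unfolding bessel_bound_def analysis_op_def by blast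
      have "norm (V n) \<le> sqrt (max Bg 0) * sqrt (Q (u n))"
        unfolding V_def Q_def using synth_bound[OF bg sc] by (simp add: analysis_op_def)
      also have "\<dots> \<le> sqrt (max Bg 0) * sqrt (inverse (real (Suc n)))"
        using u(3)[of n] by (intro mult_left_mono real_sqrt_le_mono) simp_all
      finally show "norm (V n) \<le> sqrt (max Bg 0) * sqrt (inverse (real (Suc n)))" .
    qed
    show "(\<lambda>n. sqrt (max Bg 0) * sqrt (inverse (real (Suc n)))) \<longlonglongrightarrow> 0"
      using tendsto_mult[OF tendsto_const tendsto_real_sqrt[OF LIMSEQ_inverse_real_of_nat], of "sqrt (max Bg 0)"]
      by simp
  qed
  have ul: "(u \<circ> r) \<longlonglongrightarrow> l"
  proof -
    have "(\<lambda>n. TT (u (r n)) + V (r n)) \<longlonglongrightarrow> l + 0"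
      using tendsto_add[OF lr(2)[unfolded comp_def] LIMSEQ_subseq_LIMSEQ[OF V0 lr(1), unfolded comp_def]] .
    moreover have "TT (u (r n)) + V (r n) = u (r n)" for n unfolding TT_def V_def by simp
    ultimately show ?thesis unfolding comp_def by simp
  qed
  have "(\<lambda>n. norm ((u \<circ> r) n)) \<longlonglongrightarrow> norm l" by (rule tendsto_norm[OF ul])
  moreover have "(\<lambda>n. norm ((u \<circ> r) n)) = (\<lambda>n. 1)" using u(1) by (simp add: comp_def)
  ultimately have nl: "norm l = 1" using LIMSEQ_unique[OF _ tendsto_const] by simp
  have lW: "cinner l e = 0" if "e \<in> W" for e
  proof -
    have "(\<lambda>n. cinner ((u \<circ> r) n) e) \<longlonglongrightarrow> cinner l e"
      by (rule bounded_linear.tendsto[OF bounded_linear_cinner_left ul])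
    moreover have "(\<lambda>n. cinner ((u \<circ> r) n) e) = (\<lambda>n. 0)" using u(2) that by (simp add: comp_def)
    ultimately show ?thesis using LIMSEQ_unique[OF _ tendsto_const] by simp
  qed
  have lf: "cinner l (f m) = 0" for m
  proof -
    have "(\<lambda>n. cinner ((u \<circ> r) n) (f m)) \<longlonglongrightarrow> cinner l (f m)"
      by (rule bounded_linear.tendsto[OF bounded_linear_cinner_left ul])
    moreover have "(\<lambda>n. cinner (u n) (f m)) \<longlonglongrightarrow> 0"
    proof (rule Lim_null_comparison)
      show "\<forall>\<^sub>F n in sequentially. norm (cinner (u n) (f m)) \<le> sqrt (inverse (real (Suc n)))"
      proof (intro always_eventually allI)
        fix n
        have "(cmod (cinner (u n) (f m)))\<^sup>2 \<le> inverse (real (Suc n))"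
          using term_le_Q[OF bf, of "u n" m] u(3)[of n] unfolding Q_def by linarith
        then show "norm (cinner (u n) (f m)) \<le> sqrt (inverse (real (Suc n)))"
          by (simp add: real_le_rsqrt)
      qed
      show "(\<lambda>n. sqrt (inverse (real (Suc n)))) \<longlonglongrightarrow> 0"
        using tendsto_real_sqrt[OF LIMSEQ_inverse_real_of_nat] by simp
    qed
    then have "(\<lambda>n. cinner ((u \<circ> r) n) (f m)) \<longlonglongrightarrow> 0"
      using LIMSEQ_subseq_LIMSEQ[OF _ lr(1)] by (simp add: comp_def)
    ultimately show ?thesis using LIMSEQ_unique by blast
  qed
  have "l \<in> cspan W" unfolding KW analysis_op_def using lf by auto
  then have "cinner l l = 0" using ortho_span(1)[of W l l] lW by blast
  then have "l = 0" by (simp add: cinner_eq_zero_iff)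
  then show False using nl by simp
qed


lemma prepend_sum:
  fixes f :: "nat \<Rightarrow> 'a::complex_inner" and y :: 'a and w :: "nat \<Rightarrow> 'a" and d :: nat
  assumes bf: "bessel_bound f Bf" and B0: "0 \<le> B"
  defines "h \<equiv> (\<lambda>n. (cmod (cinner y (prepend_seq d (\<lambda>n. sqrt B *\<^sub>R w n) f n)))\<^sup>2)"
  shows "summable h" "suminf h = (\<Sum>n. (cmod (cinner y (f n)))\<^sup>2) + B * (\<Sum>i<d. (cmod (cinner y (w i)))\<^sup>2)"
proof -
  have s: "summable (\<lambda>n. (cmod (cinner y (f n)))\<^sup>2)" using bf unfolding bessel_bound_def by blast
  have hs: "h (n + d) = (cmod (cinner y (f n)))\<^sup>2" for n unfolding h_def prepend_seq_def by simp
  have hi: "h i = B * (cmod (cinner y (w i)))\<^sup>2" if "i < d" for i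
    unfolding h_def prepend_seq_def using that B0
    by (simp add: cinner_scaleR_right norm_mult power_mult_distrib)
  show sh: "summable h" using s hs summable_iff_shift[of h d] by simp
  have "suminf h = (\<Sum>n. h (n + d)) + (\<Sum>i<d. h i)" by (rule suminf_split_initial_segment[OF sh])
  also have "(\<Sum>i<d. h i) = B * (\<Sum>i<d. (cmod (cinner y (w i)))\<^sup>2)"
    unfolding sum_distrib_left by (rule sum.cong) (simp_all add: hi)
  finally show "suminf h = (\<Sum>n. (cmod (cinner y (f n)))\<^sup>2) + B * (\<Sum>i<d. (cmod (cinner y (w i)))\<^sup>2)"
    by (simp add: hs)
qed

theorem mainTheorem4:
  fixes f :: "nat \<Rightarrow> 'a::{complex_inner, complete_space}" and B :: real
  assumes sep: "separable_space TYPE('a)"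
    and infdim: "infinite_dimensional TYPE('a)"
    and bessel: "bessel_seq f"
    and optB: "optimal_bessel_bound f B"
    and compact: "\<exists>g. bessel_seq g \<and>
                    compact_operator (\<lambda>x. x - synthesis_op g (analysis_op f x))"
  shows "fin_dim {x. analysis_op f x = (\<lambda>n. 0)}
    \<and> (\<forall>k (x :: nat \<Rightarrow> 'a). frame (prepend_seq k x f) \<longrightarrow>
          cdim {x. analysis_op f x = (\<lambda>n. 0)} \<le> k)
    \<and> (\<forall>w. orthonormal_basis_of (cdim {x. analysis_op f x = (\<lambda>n. 0)}) w
                                {x. analysis_op f x = (\<lambda>n. 0)} \<longrightarrow>
          frame (prepend_seq (cdim {x. analysis_op f x = (\<lambda>n. 0)})
                   (\<lambda>n. sqrt B *\<^sub>R w n) f))"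
proof -
  define K where "K = {x. analysis_op f x = (\<lambda>n. 0)}"
  have Kmem: "x \<in> K \<longleftrightarrow> (\<forall>n. cinner x (f n) = 0)" for x
    unfolding K_def analysis_op_def by (simp add: fun_eq_iff)
  have Ksub: "csubspace K" unfolding csubspace_def
  proof (intro conjI ballI allI)
    show "0 \<in> K" unfolding Kmem by simp
    show "x + y \<in> K" if "x \<in> K" "y \<in> K" for x y
      using that unfolding Kmem by (simp add: cinner_add_left)
    show "a *\<^sub>C x \<in> K" if "x \<in> K" for a x
      using that unfolding Kmem by (simp add: cinner_scaleC_left)
  qed
  obtain g where g: "bessel_seq g" "compact_operator (\<lambda>x. x - synthesis_op g (analysis_op f x))"
    using compact by blast
  obtain Bg where bg: "bessel_bound g Bg" using g(1) unfolding bessel_seq_def by blast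
  have bf: "bessel_bound f B" using optB unfolding optimal_bessel_bound_def by blast
  have Tid: "x - synthesis_op g (analysis_op f x) = x" if "x \<in> K" for x
  proof -
    have "analysis_op f x = (\<lambda>n. 0)" using that unfolding K_def by simp
    then show ?thesis by (simp add: synthesis_op_def)
  qed
  have fd: "fin_dim K" by (rule fin_dim_of_compact_id[OF Ksub g(2) Tid])
  obtain S0 where S0: "finite S0" "S0 \<subseteq> K" "cspan S0 = K" using fd unfolding fin_dim_def by blast
  obtain E where E: "orthonormal E" "cspan E = K" using gram_schmidt[OF S0(1)] S0(3) by blast
  have fE: "finite E" using E(1) unfolding orthonormal_def by simp
  have part2: "cdim K \<le> k" if fr: "frame (prepend_seq k xs f)" for k xs
  proof -
    obtain A where A: "0 < A" "\<And>y. A * (norm y)\<^sup>2 \<le> (\<Sum>n. (cmod (cinner y (prepend_seq k xs f n)))\<^sup>2)"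
      using fr unfolding frame_def by blast
    define S where "S = (\<lambda>j. proj E (xs j)) ` {..<k}"
    have fS: "finite S" unfolding S_def by simp
    have SK: "S \<subseteq> K" unfolding S_def using proj_in_cspan[OF fE] E(2) by blast
    have spanS: "cspan S = K"
    proof (rule ccontr)
      assume ne: "cspan S \<noteq> K"
      have "cspan S \<subseteq> K" by (rule cspan_subset[OF Ksub SK])
      then obtain y where y: "y \<in> K" "y \<notin> cspan S" using ne by blast
      obtain E' where E': "orthonormal E'" "cspan E' = cspan S" using gram_schmidt[OF fS] by blast
      have fE': "finite E'" using E'(1) unfolding orthonormal_def by simp
      define z where "z = y - proj E' y"
      have pK: "proj E' y \<in> K" using proj_in_cspan[OF fE', of y] E'(2) \<open>cspan S \<subseteq> K\<close> by blast
      have zK: "z \<in> K" unfolding z_def by (rule csubspace_diff[OF Ksub y(1) pK])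
      have z0: "z \<noteq> 0" using y proj_in_cspan[OF fE', of y] E'(2) unfolding z_def by auto
      have zo: "\<And>e. e \<in> E' \<Longrightarrow> cinner z e = 0" unfolding z_def by (rule cinner_resid[OF E'(1)])
      have zS: "cinner z s = 0" if "s \<in> S" for s
        using ortho_span(2)[of E' z s, OF zo] cspan_superset[of S] that E'(2) by blast
      have zx: "cinner z (xs j) = 0" if "j < k" for j
      proof -
        have r: "cinner z (xs j - proj E (xs j)) = 0"
          using ortho_span(1)[of E "xs j - proj E (xs j)" z] cinner_resid[OF E(1)] zK E(2) by blast
        have "proj E (xs j) \<in> S" unfolding S_def using that by blast
        then have "cinner z (proj E (xs j)) = 0" by (rule zS)
        then show ?thesis using r by (simp add: cinner_diff_right)
      qed
      have zf: "cinner z (f n) = 0" for n using zK Kmem by blast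
      have "(\<lambda>n. (cmod (cinner z (prepend_seq k xs f n)))\<^sup>2) = (\<lambda>n. 0)"
        unfolding prepend_seq_def using zx zf by (auto simp: fun_eq_iff)
      then have "A * (norm z)\<^sup>2 \<le> 0" using A(2)[of z] by simp
      then have "norm z = 0" using A(1) by (simp add: mult_le_0_iff)
      then show False using z0 by simp
    qed
    have "cdim K \<le> card S" unfolding cdim_def
      by (rule Least_le) (use fS SK spanS in blast)
    also have "card S \<le> k" unfolding S_def using card_image_le[of "{..<k}"] by simp
    finally show ?thesis .
  qed
  have Bpos: "0 < B"
  proof (rule ccontr)
    assume "\<not> 0 < B"
    then have "x \<in> K" for x
    proof -
      have s: "summable (\<lambda>n. (cmod (cinner x (f n)))\<^sup>2)" "(\<Sum>n. (cmod (cinner x (f n)))\<^sup>2) \<le> B * (norm x)\<^sup>2"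
        using bf unfolding bessel_bound_def by auto
      have "B * (norm x)\<^sup>2 \<le> 0" using \<open>\<not> 0 < B\<close> by (simp add: mult_nonpos_nonneg)
      then have "(cmod (cinner x (f n)))\<^sup>2 \<le> 0" for n using term_le_Q[OF bf, of x n] s(2) by linarith
      then show ?thesis unfolding Kmem by simp
    qed
    then have "K = UNIV" by blast
    then show False using fd infdim unfolding infinite_dimensional_def by simp
  qed
  have part3: "frame (prepend_seq (cdim K) (\<lambda>n. sqrt B *\<^sub>R w n) f)"
    if ob: "orthonormal_basis_of (cdim K) w K" for w
  proof -
    define d where "d = cdim K"
    define W where "W = w ` {..<d}"
    have wK: "\<forall>i<d. w i \<in> K" "\<forall>i<d. \<forall>j<d. cinner (w i) (w j) = (if i = j then 1 else 0)"
      "cspan W = K" using ob unfolding orthonormal_basis_of_def d_def W_def by auto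
    have injw: "inj_on w {..<d}"
    proof (rule inj_onI)
      fix i j assume "i \<in> {..<d}" "j \<in> {..<d}" "w i = w j"
      then show "i = j" using wK(2) by (metis one_neq_zero lessThan_iff)
    qed
    have W: "orthonormal W" unfolding orthonormal_def W_def
      using wK(2) by auto
    obtain c where c: "c > 0" "\<And>q. (\<forall>e\<in>W. cinner q e = 0) \<Longrightarrow> c * (norm q)\<^sup>2 \<le> (\<Sum>n. (cmod (cinner q (f n)))\<^sup>2)"
      using lower_bound[OF bf bg g(2) W wK(3)[unfolded K_def]] by blast
    have sumW: "(\<Sum>i<d. (cmod (cinner y (w i)))\<^sup>2) = (\<Sum>e\<in>W. (cmod (cinner y e))\<^sup>2)" for y
      unfolding W_def by (simp add: sum.reindex[OF injw])
    define h where "h = (\<lambda>y n. (cmod (cinner y (prepend_seq d (\<lambda>n. sqrt B *\<^sub>R w n) f n)))\<^sup>2)"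
    have all: "summable (h y) \<and> min B c * (norm y)\<^sup>2 \<le> suminf (h y) \<and> suminf (h y) \<le> 2 * B * (norm y)\<^sup>2" for y
    proof -
      define P where "P = (\<Sum>e\<in>W. (cmod (cinner y e))\<^sup>2)"
      define Qy where "Qy = (\<Sum>n. (cmod (cinner y (f n)))\<^sup>2)"
      note ps = prepend_sum[OF bf less_imp_le[OF Bpos], of y d w]
      have s1: "summable (h y)" unfolding h_def by (rule ps(1))
      have eq: "suminf (h y) = Qy + B * P"
        using ps(2) sumW unfolding Qy_def P_def h_def by simp
      have P0: "0 \<le> P" unfolding P_def by (simp add: sum_nonneg)
      have Pn: "P \<le> (norm y)\<^sup>2" unfolding P_def by (rule bessel_fin[OF W])
      have Qn: "Qy \<le> B * (norm y)\<^sup>2" using bf unfolding bessel_bound_def Qy_def by blast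
      have BP: "B * P \<le> B * (norm y)\<^sup>2" using mult_left_mono[OF Pn, of B] Bpos by simp
      have ub: "Qy + B * P \<le> 2 * B * (norm y)\<^sup>2" using BP Qn by linarith
      define q where "q = y - proj W y"
      have nd: "(norm y)\<^sup>2 = P + (norm q)\<^sup>2" unfolding P_def q_def by (rule norm_decomp[OF W])
      have fW: "finite W" unfolding W_def by simp
      have pK: "proj W y \<in> K" using proj_in_cspan[OF fW, of y] wK(3) by simp
      have "cinner y (f n) = cinner q (f n)" for n
      proof -
        have "cinner (proj W y) (f n) = 0" using pK Kmem by blast
        then show ?thesis unfolding q_def by (simp add: cinner_diff_left)
      qed
      then have Qq: "Qy = (\<Sum>n. (cmod (cinner q (f n)))\<^sup>2)" unfolding Qy_def by simp
      have cq: "c * (norm q)\<^sup>2 \<le> Qy" unfolding Qq q_def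
        by (rule c(2)) (use cinner_resid[OF W] in blast)
      have "min B c * (norm y)\<^sup>2 = min B c * P + min B c * (norm q)\<^sup>2" unfolding nd by (simp add: algebra_simps)
      also have "\<dots> \<le> B * P + c * (norm q)\<^sup>2"
        by (intro add_mono mult_right_mono) (simp_all add: P0)
      also have "\<dots> \<le> Qy + B * P" using cq by simp
      finally have lb: "min B c * (norm y)\<^sup>2 \<le> Qy + B * P" .
      show ?thesis using s1 lb ub eq by simp
    qed
    have "0 < min B c" using Bpos c(1) by simp
    then show ?thesis unfolding frame_def d_def[symmetric]
      using all unfolding h_def by blast
  qed
  have "fin_dim K \<and> (\<forall>k (x :: nat \<Rightarrow> 'a). frame (prepend_seq k x f) \<longrightarrow> cdim K \<le> k)
    \<and> (\<forall>w. orthonormal_basis_of (cdim K) w K \<longrightarrow> frame (prepend_seq (cdim K) (\<lambda>n. sqrt B *\<^sub>R w n) f))"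
    using fd part2 part3 by blast
  then show ?thesis unfolding K_def .
qed

end
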